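(* Let $P\subseteq\mathbb{R}^n$ be an $n$-dimensional rational simplex with vertices $v_0,\dots,v_n$, and let $a_i$ be the lattice distance of $v_i$ from the facet of $P$ not containing $v_i$. Then \[\tau(P)=\mu(P)=\sum_{i=0}^n\frac{1}{a_i}.\]
   Context: Write $P$ irredundantly as $\{x:\langle c_j,x\rangle\ge b_j\}$ with primitive $c_j\in(\mathbb{Z}^n)^*$, each inequality defining a facet $F_j$; the lattice distance of $y$ from $F_j$ is $d_{F_j}(y):=\langle c_j,y\rangle-b_j$, and $d_P(y):=\min_j d_{F_j}(y)$. $P^{(s)}:=\{y:d_P(y)\ge s\}$, $\mu(P):=(\sup\{s>0:P^{(s)}\neq\emptyset\})^{-1}$, and $\tau(P):=(\sup\{s>0:\mathcal{N}(P^{(s)})=\mathcal{N}(P)\})^{-1}$, where $\mathcal{N}$ denotes the inner normal fan. *)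

theory Defs
  imports "HOL-Analysis.Analysis"
begin

text \<open>Vectors in R^n are modelled as real^'n; the dual lattice is identified with
  the integer vectors via the standard inner product.\<close>

definition primitive_int_vec :: "real^'n \<Rightarrow> bool" where
  "primitive_int_vec c \<longleftrightarrow> (\<forall>i. c$i \<in> \<int>) \<and>
     (\<forall>k::int. k > 1 \<longrightarrow> (\<exists>i. c$i / of_int k \<notin> \<int>))"

definition facet_ineq :: "(real^'n) set \<Rightarrow> (real^'n) set \<Rightarrow> real^'n \<Rightarrow> real \<Rightarrow> bool" where
  "facet_ineq P F c b \<longleftrightarrow> F facet_of P \<and> primitive_int_vec c \<and>
     P \<subseteq> {x. b \<le> c \<bullet> x} \<and> F = P \<inter> {x. c \<bullet> x = b}"

definition lattice_dist :: "(real^'n) set \<Rightarrow> (real^'n) set \<Rightarrow> real^'n \<Rightarrow> real" where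
  "lattice_dist P F y = (THE d. \<exists>c b. facet_ineq P F c b \<and> d = c \<bullet> y - b)"

definition dP :: "(real^'n) set \<Rightarrow> real^'n \<Rightarrow> real" where
  "dP P y = Inf ((\<lambda>F. lattice_dist P F y) ` {F. F facet_of P})"

definition layer :: "(real^'n) set \<Rightarrow> real \<Rightarrow> (real^'n) set" where
  "layer P s = {y. s \<le> dP P y}"

definition normal_cone :: "(real^'n) set \<Rightarrow> (real^'n) set \<Rightarrow> (real^'n) set" where
  "normal_cone Q F = {u. \<forall>y\<in>F. \<forall>x\<in>Q. u \<bullet> y \<le> u \<bullet> x}"

definition normal_fan :: "(real^'n) set \<Rightarrow> (real^'n) set set" where
  "normal_fan Q = {normal_cone Q F | F. F face_of Q \<and> F \<noteq> {}}"

definition mu :: "(real^'n) set \<Rightarrow> real" where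
  "mu P = inverse (Sup {s. s > 0 \<and> layer P s \<noteq> {}})"

definition tau :: "(real^'n) set \<Rightarrow> real" where
  "tau P = inverse (Sup {s. s > 0 \<and> normal_fan (layer P s) = normal_fan P})"

end

theory Submission
  imports Defs
begin


lemma det_rat:
  fixes M :: "real^'n^'n"
  assumes "\<And>i j. M$i$j \<in> \<rat>"
  shows "det M \<in> \<rat>"
  unfolding det_def
  by (intro Rats_sum Rats_mult Rats_prod assms) (auto simp: Rats_of_int)

lemma bary_exists:
  fixes v :: "nat \<Rightarrow> real^'n"
  assumes rat: "\<forall>i\<le>CARD('n). \<forall>j. v i $ j \<in> \<rat>"
    and inj: "inj_on v {..CARD('n)}"
    and indep: "\<not> affine_dependent (v ` {..CARD('n)})"
  shows "\<exists>w \<beta>. (\<forall>i\<le>CARD('n). \<forall>j. w i $ j \<in> \<rat>)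
     \<and> (\<forall>i\<le>CARD('n). \<forall>j\<le>CARD('n). w i \<bullet> v j + \<beta> i = (if i = j then 1 else 0))
     \<and> (\<forall>y. (\<Sum>i\<le>CARD('n). w i \<bullet> y + \<beta> i) = 1)
     \<and> (\<forall>y. (\<Sum>i\<le>CARD('n). (w i \<bullet> y + \<beta> i) *\<^sub>R v i) = y)"
proof -
  define N where "N = CARD('n)"
  have cardN: "card {1..N} = CARD('n)" by (simp add: N_def)
  obtain g where g: "bij_betw g (UNIV::'n set) {1..N}"
    using finite_same_card_bij[of "UNIV::'n set" "{1..N}"] cardN by auto
  define h where "h = inv_into UNIV g"
  have hg: "h (g c) = c" for c using g unfolding h_def bij_betw_def by auto
  have gh: "k \<in> {1..N} \<Longrightarrow> g (h k) = k" for k using g unfolding h_def bij_betw_def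
    by (simp add: f_inv_into_f)
  have gr: "g c \<in> {1..N}" for c using g unfolding bij_betw_def by auto
  have hinj: "inj_on h {1..N}" using gh by (metis inj_on_inverseI)
  define A :: "real^'n^'n" where "A = (\<chi> r c. (v (g c) - v 0) $ r)"
  have colA: "column c A = v (g c) - v 0" for c
    by (simp add: A_def column_def vec_eq_iff)
  have Ax: "A *v x = (\<Sum>c\<in>UNIV. x$c *\<^sub>R (v (g c) - v 0))" for x
    by (simp add: matrix_mult_sum colA scalar_mult_eq_scaleR)
  have detA: "det A \<noteq> 0"
  proof -
    have "inj ((*v) A)"
    proof (rule linear_injective_0[THEN iffD2])
      show "linear ((*v) A)" by (simp add: matrix_vector_mul_linear)
      show "\<forall>x. A *v x = 0 \<longrightarrow> x = 0"
      proof (intro allI impI)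
        fix x assume x0: "A *v x = 0"
        define \<phi> where "\<phi> c = v (g c) - v 0" for c
        define S where "S = (\<lambda>x. - v 0 + x) ` (v ` {1..N})"
        have ins: "v ` {..N} = insert (v 0) (v ` {1..N})" by (auto simp: image_iff) (metis Suc_le_eq atLeastAtMost_iff not_gr0 zero_less_iff_neq_zero)
        have nin: "v 0 \<notin> v ` {1..N}" using inj unfolding N_def[symmetric] by (auto simp: inj_on_def) (metis Suc_n_not_le_n atMost_iff le0)
        have indS: "\<not> dependent S"
        proof -
          have "\<not> affine_dependent (insert (v 0) (v ` {1..N}))" using indep ins N_def by simp
          then show ?thesis using affine_dependent_iff_dependent[OF nin] unfolding S_def by simp
        qed
        have phiS: "\<phi> ` UNIV = S"
        proof -
          have "g ` UNIV = {1..N}" using g by (simp add: bij_betw_def)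
          then show ?thesis unfolding S_def \<phi>_def by (auto simp: image_iff) (metis atLeastAtMost_iff gh One_nat_def)
        qed
        have phiinj: "inj \<phi>"
        proof (rule injI)
          fix a b assume "\<phi> a = \<phi> b"
          then have "v (g a) = v (g b)" by (simp add: \<phi>_def)
          moreover have "g a \<in> {..N}" "g b \<in> {..N}" using gr[of a] gr[of b] by auto
          ultimately have "g a = g b" using inj unfolding N_def[symmetric] by (auto simp: inj_on_def)
          then show "a = b" by (metis hg)
        qed
        define u where "u s = x $ (inv \<phi> s)" for s
        have "(\<Sum>s\<in>S. u s *\<^sub>R s) = (\<Sum>c\<in>UNIV. u (\<phi> c) *\<^sub>R \<phi> c)"
          unfolding phiS[symmetric] using sum.reindex[OF phiinj, of "\<lambda>s. u s *\<^sub>R s"] by simp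
        also have "\<dots> = A *v x"
        proof -
          have "inv \<phi> (\<phi> c) = c" for c by (simp add: inv_f_f phiinj)
          then show ?thesis unfolding Ax u_def by (simp add: \<phi>_def)
        qed
        finally have sum0: "(\<Sum>s\<in>S. u s *\<^sub>R s) = 0" using x0 by simp
        show "x = 0"
        proof (rule ccontr)
          assume "x \<noteq> 0"
          then obtain c where c: "x $ c \<noteq> 0" by (auto simp: vec_eq_iff)
          have "u (\<phi> c) \<noteq> 0" using c phiinj by (simp add: u_def)
          moreover have "\<phi> c \<in> S" using phiS by auto
          moreover have "finite S" unfolding S_def by simp
          ultimately have "dependent S" using dependent_finite sum0 by blast
          then show False using indS by simp
        qed
      qed
    qed
    then show ?thesis using det_nz_iff_inj[of "(*v) A"]
      by (simp add: matrix_vector_mul_linear)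
  qed
  then have "invertible A" by (simp add: invertible_det_nz)
  then obtain B where AB: "A ** B = mat 1" and BA: "B ** A = mat 1"
    unfolding invertible_def by blast
  define R where "R k = row (h k) B" for k
  define w where "w i = (if i = 0 then - (\<Sum>k\<in>{1..N}. R k) else R i)" for i
  define \<beta> where "\<beta> i = (if i = 0 then 1 + (\<Sum>k\<in>{1..N}. R k \<bullet> v 0) else - (R i \<bullet> v 0))" for i
  define f where "f i y = w i \<bullet> y + \<beta> i" for i y
  have fk: "k \<in> {1..N} \<Longrightarrow> f k y = (B *v (y - v 0)) $ (h k)" for k y
    by (simp add: f_def w_def \<beta>_def R_def inner_vec_def matrix_vector_mult_def row_def algebra_simps sum_subtractf)
  have f0: "f 0 y = 1 - (\<Sum>k\<in>{1..N}. f k y)" for y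
    by (simp add: f_def w_def \<beta>_def sum.distrib inner_sum_left sum_negf sum_subtractf)
  have ins: "{..N} = insert 0 {1..N}" by auto
  have sum1: "(\<Sum>i\<le>N. f i y) = 1" for y
    unfolding ins by (simp add: f0)
  have rep: "(\<Sum>i\<le>N. f i y *\<^sub>R v i) = y" for y
  proof -
    have "y - v 0 = A *v (B *v (y - v 0))" by (simp add: matrix_vector_mul_assoc AB)
    also have "\<dots> = (\<Sum>c\<in>UNIV. (B *v (y - v 0)) $ c *\<^sub>R (v (g c) - v 0))" by (rule Ax)
    also have "\<dots> = (\<Sum>c\<in>UNIV. f (g c) y *\<^sub>R (v (g c) - v 0))"
      by (intro sum.cong refl) (metis fk gr hg)
    also have "\<dots> = (\<Sum>k\<in>{1..N}. f k y *\<^sub>R (v k - v 0))"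
      using sum.reindex_bij_betw[OF g, of "\<lambda>k. f k y *\<^sub>R (v k - v 0)"] by simp
    finally have e: "y - v 0 = (\<Sum>k\<in>{1..N}. f k y *\<^sub>R (v k - v 0))" .
    have "(\<Sum>i\<le>N. f i y *\<^sub>R v i) = f 0 y *\<^sub>R v 0 + (\<Sum>k\<in>{1..N}. f k y *\<^sub>R v k)"
      unfolding ins by simp
    also have "\<dots> = v 0 + (\<Sum>k\<in>{1..N}. f k y *\<^sub>R (v k - v 0))"
      by (simp add: f0 scaleR_diff_right scaleR_diff_left sum_subtractf scaleR_sum_left algebra_simps)
    also have "\<dots> = y" using e by (simp add: algebra_simps)
    finally show ?thesis .
  qed
  have delta1: "k \<in> {1..N} \<Longrightarrow> j \<le> N \<Longrightarrow> f k (v j) = (if k = j then 1 else 0)" for k j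
  proof -
    assume k: "k \<in> {1..N}" and j: "j \<le> N"
    show ?thesis
    proof (cases "j = 0")
      case True then show ?thesis using k by (simp add: fk)
    next
      case False
      then have j1: "j \<in> {1..N}" using j by auto
      have "v j - v 0 = A *v axis (h j) 1"
      proof -
        have "A *v axis (h j) 1 = (\<Sum>c\<in>UNIV. (if c = h j then v (g c) - v 0 else 0))"
          unfolding Ax by (intro sum.cong refl) (simp add: axis_def)
        also have "\<dots> = v j - v 0" using gh[OF j1] by simp
        finally show ?thesis by (rule sym)
      qed
      then have "B *v (v j - v 0) = axis (h j) 1" by (simp add: matrix_vector_mul_assoc BA)
      then have "f k (v j) = axis (h j) 1 $ (h k)" using fk[OF k] by simp
      also have "\<dots> = (if h k = h j then 1 else 0)" by (simp add: axis_def)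
      also have "(h k = h j) = (k = j)" using hinj k j1 by (auto dest: inj_onD)
      finally show ?thesis .
    qed
  qed
  have delta: "i \<le> N \<Longrightarrow> j \<le> N \<Longrightarrow> f i (v j) = (if i = j then 1 else 0)" for i j
  proof -
    assume i: "i \<le> N" and j: "j \<le> N"
    show ?thesis
    proof (cases "i = 0")
      case False then show ?thesis using delta1[of i j] i j by simp
    next
      case True
      have "(\<Sum>k\<in>{1..N}. f k (v j)) = (\<Sum>k\<in>{1..N}. if k = j then 1 else 0)"
        by (intro sum.cong refl) (simp add: delta1 j)
      also have "\<dots> = (if j \<in> {1..N} then 1 else 0)" by simp
      finally have "(\<Sum>k\<in>{1..N}. f k (v j)) = (if j \<in> {1..N} then 1 else 0)" .
      then show ?thesis using True f0[of "v j"] j by (cases "j = 0") auto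
    qed
  qed
  have Brat: "B $ r $ c \<in> \<rat>" for r c
  proof -
    have "A *v (B *v axis c 1) = axis c 1" by (simp add: matrix_vector_mul_assoc AB)
    then have "B *v axis c 1 = (\<chi> k. det(\<chi> i j. if j=k then axis c 1$i else A$i$j) / det A)"
      using cramer[OF detA] by blast
    moreover have "(B *v axis c 1) $ r = B $ r $ c"
      by (simp add: matrix_vector_mult_def axis_def if_distrib cong: if_cong)
    moreover have "A $ i $ j \<in> \<rat>" for i j
      using rat gr[of j] unfolding A_def N_def by auto
    ultimately have e: "B $ r $ c = det (\<chi> i j. if j = r then axis c 1 $ i else A $ i $ j) / det A"
      by simp
    have "det (\<chi> i j. if j = r then axis c 1 $ i else A $ i $ j) \<in> \<rat>"
      "det A \<in> \<rat>"
      by (rule det_rat, simp add: axis_def \<open>\<And>i j. A $ i $ j \<in> \<rat>\<close>)+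
    then show ?thesis unfolding e by (rule Rats_divide)
  qed
  have wrat: "w i $ j \<in> \<rat>" for i j
    by (auto simp: w_def R_def row_def intro!: Rats_sum Brat)
  show ?thesis
    apply (rule exI[of _ w], rule exI[of _ \<beta>])
    using wrat delta sum1 rep unfolding f_def N_def by auto
qed



lemma prim_nonzero: "primitive_int_vec c \<Longrightarrow> c \<noteq> 0"
proof
  assume "primitive_int_vec c" "c = 0"
  then have h: "\<forall>k::int. k > 1 \<longrightarrow> (\<exists>i. c$i / of_int k \<notin> \<int>)" unfolding primitive_int_vec_def by blast
  from h[rule_format, of 2] obtain i where "c$i / of_int 2 \<notin> \<int>" by auto
  then show False using \<open>c = 0\<close> by simp
qed

lemma int_div_Ints_dvd:
  fixes a k :: int
  assumes "k \<noteq> 0" "of_int a / of_int k \<in> (\<int>::real set)"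
  shows "k dvd a"
proof -
  obtain z where "of_int a / of_int k = (of_int z :: real)" using assms(2) by (auto elim: Ints_cases)
  then have "(of_int a :: real) = of_int (z * k)" using assms(1) by (simp add: field_simps)
  then have "a = z * k" by (simp only: of_int_eq_iff)
  then show ?thesis by simp
qed

lemma prim_unique:
  fixes c c' :: "real^'n"
  assumes pc: "primitive_int_vec c" and pc': "primitive_int_vec c'" and t: "t > 0" and eq: "c' = t *\<^sub>R c"
  shows "t = 1"
proof -
  have cint: "\<forall>k. c$k \<in> \<int>" and c'int: "\<forall>k. c'$k \<in> \<int>"
    using pc pc' unfolding primitive_int_vec_def by auto
  have "\<forall>k. \<exists>z::int. c$k = of_int z" using cint by (auto elim: Ints_cases)
  then obtain C where C: "\<And>k. c$k = of_int (C k)" using choice[of "\<lambda>k z. c$k = of_int z"] by blast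
  have "\<forall>k. \<exists>z::int. c'$k = of_int z" using c'int by (auto elim: Ints_cases)
  then obtain C' where C': "\<And>k. c'$k = of_int (C' k)" using choice[of "\<lambda>k z. c'$k = of_int z"] by blast
  obtain j where j: "c$j \<noteq> 0" using prim_nonzero[OF pc] by (auto simp: vec_eq_iff)
  have "t = c'$j / c$j" using eq j by simp
  then have "t \<in> \<rat>" using C C' by simp
  then obtain p q where q: "q > 0" and cop: "coprime p q" and tpq: "t = of_int p / of_int q"
    by (rule Rats_cases')
  have p: "p > 0" using t q tpq by (simp add: zero_less_divide_iff)
  have key: "q * C' k = p * C k" for k
  proof -
    have "c'$k = of_int p / of_int q * c$k" using eq tpq by simp
    then have "(of_int (q * C' k) :: real) = of_int (p * C k)" using q C C' by (simp add: field_simps)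
    then show ?thesis by (simp only: of_int_eq_iff)
  qed
  have q1: "q = 1"
  proof (rule ccontr)
    assume "q \<noteq> 1"
    then have "q > 1" using q by simp
    then obtain k where k: "c$k / of_int q \<notin> \<int>" using pc unfolding primitive_int_vec_def by blast
    have "q dvd p * C k" unfolding key[of k, symmetric] by simp
    moreover have "coprime q p" using cop by (simp add: coprime_commute)
    ultimately have "q dvd C k" using coprime_dvd_mult_right_iff[of q p "C k"] by simp
    then obtain z where "C k = q * z" by blast
    then have "c$k / of_int q = of_int z" using C[of k] q by simp
    then show False using k by simp
  qed
  have p1: "p = 1"
  proof (rule ccontr)
    assume "p \<noteq> 1"
    then have "p > 1" using p by simp
    then obtain k where k: "c'$k / of_int p \<notin> \<int>" using pc' unfolding primitive_int_vec_def by blast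
    have "C' k = p * C k" using key[of k] q1 by simp
    then have "c'$k / of_int p = of_int (C k)" using C'[of k] p by simp
    then show False using k by simp
  qed
  show ?thesis using tpq p1 q1 by simp
qed

lemma prim_exists:
  fixes w :: "real^'n"
  assumes rat: "\<And>j. w$j \<in> \<rat>" and nz: "w \<noteq> 0"
  shows "\<exists>m>0. primitive_int_vec (m *\<^sub>R w)"
proof -
  have "\<forall>j. \<exists>pq::int\<times>int. snd pq > 0 \<and> w$j = of_int (fst pq) / of_int (snd pq)"
  proof
    fix j
    obtain a b where "b > 0" "w$j = of_int a / of_int b" using Rats_cases'[OF rat[of j]] by metis
    then show "\<exists>pq::int\<times>int. snd pq > 0 \<and> w$j = of_int (fst pq) / of_int (snd pq)"
      by (intro exI[of _ "(a,b)"]) simp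
  qed
  then obtain PQ where PQ: "\<And>j. snd (PQ j) > 0 \<and> w$j = of_int (fst (PQ j)) / of_int (snd (PQ j))"
    using choice[of "\<lambda>j pq. snd pq > 0 \<and> w$j = of_int (fst pq) / of_int (snd pq)"] by blast
  define P where "P j = fst (PQ j)" for j
  define Q where "Q j = snd (PQ j)" for j
  have Q: "Q j > 0" and wj: "w$j = of_int (P j) / of_int (Q j)" for j using PQ unfolding P_def Q_def by auto
  define D where "D = (\<Prod>j\<in>UNIV. Q j)"
  have D: "D > 0" unfolding D_def using Q by (simp add: prod_pos)
  define Z where "Z j = P j * (\<Prod>k\<in>UNIV-{j}. Q k)" for j
  have DZ: "of_int D * w$j = of_int (Z j)" for j
  proof -
    have "D = Q j * (\<Prod>k\<in>UNIV-{j}. Q k)" unfolding D_def by (simp add: prod.remove)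
    then show ?thesis using Q[of j] unfolding wj Z_def by (simp add: field_simps)
  qed
  obtain j0 where j0: "w$j0 \<noteq> 0" using nz by (auto simp: vec_eq_iff)
  have Zj0: "Z j0 \<noteq> 0"
  proof
    assume "Z j0 = 0"
    then have "of_int D * w$j0 = 0" using DZ[of j0] by simp
    then show False using D j0 by simp
  qed
  define G where "G = Gcd (range Z)"
  have G: "G > 0"
  proof -
    have "G \<noteq> 0" unfolding G_def using Zj0 by auto
    moreover have "G \<ge> 0" unfolding G_def by simp
    ultimately show ?thesis by simp
  qed
  have Gdvd: "G dvd Z j" for j unfolding G_def by (rule Gcd_dvd) simp
  define m where "m = of_int D / (of_int G :: real)"
  have mw: "(m *\<^sub>R w)$j = of_int (Z j div G)" for j
  proof -
    have "(m *\<^sub>R w)$j = of_int (Z j) / of_int G" using DZ[of j] unfolding m_def by simp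
    also have "\<dots> = of_int (Z j div G)"
    proof -
      obtain z where z: "Z j = G * z" using Gdvd[of j] by (auto elim!: dvdE)
      show ?thesis using G unfolding z by simp
    qed
    finally show ?thesis .
  qed
  have "primitive_int_vec (m *\<^sub>R w)"
    unfolding primitive_int_vec_def
  proof (intro conjI allI impI)
    show "(m *\<^sub>R w)$j \<in> \<int>" for j using mw by simp
    fix k :: int assume k: "k > 1"
    show "\<exists>i. (m *\<^sub>R w) $ i / of_int k \<notin> \<int>"
    proof (rule ccontr)
      assume "\<not> ?thesis"
      then have "k dvd Z j div G" for j using int_div_Ints_dvd[of k "Z j div G"] k mw by auto
      then have "G * k dvd Z j" for j
      proof -
        obtain z where z: "Z j = G * z" using Gdvd[of j] by (auto elim!: dvdE)
        have "k dvd z" using \<open>k dvd Z j div G\<close> G unfolding z by simp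
        then show ?thesis unfolding z by simp
      qed
      then have "G * k dvd G" unfolding G_def by (intro Gcd_greatest) auto
      then have "\<bar>G * k\<bar> \<le> \<bar>G\<bar>" using G by (intro dvd_imp_le_int) auto
      then show False using G k by (simp add: abs_mult)
    qed
  qed
  moreover have "m > 0" unfolding m_def using D G by simp
  ultimately show ?thesis by blast
qed



locale bary =
  fixes v :: "nat \<Rightarrow> real^'n" and w :: "nat \<Rightarrow> real^'n" and \<beta> :: "nat \<Rightarrow> real"
  assumes inj: "inj_on v {..CARD('n)}"
    and indep: "\<not> affine_dependent (v ` {..CARD('n)})"
    and wrat: "\<And>i j. i \<le> CARD('n) \<Longrightarrow> w i $ j \<in> \<rat>"
    and delta: "\<And>i j. i \<le> CARD('n) \<Longrightarrow> j \<le> CARD('n) \<Longrightarrow> w i \<bullet> v j + \<beta> i = (if i = j then 1 else 0)"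
    and sum1: "\<And>y. (\<Sum>i\<le>CARD('n). w i \<bullet> y + \<beta> i) = 1"
    and rep: "\<And>y. (\<Sum>i\<le>CARD('n). (w i \<bullet> y + \<beta> i) *\<^sub>R v i) = y"
begin

definition f where "f i y = w i \<bullet> y + \<beta> i"
definition PP where "PP = convex hull (v ` {..CARD('n)})"
definition FF where "FF i = convex hull (v ` ({..CARD('n)} - {i}))"

lemma fdelta: "i \<le> CARD('n) \<Longrightarrow> j \<le> CARD('n) \<Longrightarrow> f i (v j) = (if i = j then 1 else 0)"
  using delta by (simp add: f_def)

lemma fsum1: "(\<Sum>i\<le>CARD('n). f i y) = 1" using sum1 by (simp add: f_def)
lemma frep: "(\<Sum>i\<le>CARD('n). f i y *\<^sub>R v i) = y" using rep by (simp add: f_def)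

lemma f_comb:
  assumes J: "J \<subseteq> {..CARD('n)}" and s: "sum \<mu> J = 1" and i: "i \<le> CARD('n)"
  shows "f i (\<Sum>j\<in>J. \<mu> j *\<^sub>R v j) = (if i \<in> J then \<mu> i else 0)"
proof -
  have fin: "finite J" using J finite_subset by blast
  have "f i (\<Sum>j\<in>J. \<mu> j *\<^sub>R v j) = (\<Sum>j\<in>J. \<mu> j * (w i \<bullet> v j)) + \<beta> i * sum \<mu> J"
    using s by (simp add: f_def inner_sum_right)
  also have "\<dots> = (\<Sum>j\<in>J. \<mu> j * f i (v j))"
    by (simp add: f_def sum_distrib_left sum_distrib_right sum.distrib algebra_simps)
  also have "\<dots> = (\<Sum>j\<in>J. if j = i then \<mu> j else 0)"
    using J i by (intro sum.cong refl) (auto simp: fdelta)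
  also have "\<dots> = (if i \<in> J then \<mu> i else 0)" using fin by simp
  finally show ?thesis .
qed

lemma f_two: "f i ((1 - t) *\<^sub>R a + t *\<^sub>R b) = (1 - t) * f i a + t * f i b"
  by (simp add: f_def inner_add_right algebra_simps)

lemma hull_char:
  assumes J: "J \<subseteq> {..CARD('n)}"
  shows "convex hull (v ` J) = {y. (\<forall>i\<le>CARD('n). 0 \<le> f i y) \<and> (\<forall>i\<in>{..CARD('n)} - J. f i y = 0)}"
proof (intro equalityI subsetI)
  have fin: "finite J" using J finite_subset by blast
  have injJ: "inj_on v J" using inj J inj_on_subset by blast
  fix y assume "y \<in> convex hull (v ` J)"
  then obtain u where u0: "\<forall>x\<in>v`J. 0 \<le> u x" and u1: "sum u (v`J) = 1" and uy: "(\<Sum>x\<in>v`J. u x *\<^sub>R x) = y"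
    using convex_hull_finite[of "v`J"] fin by auto
  have s1: "(\<Sum>j\<in>J. u (v j)) = 1" using u1 sum.reindex[OF injJ, of u] by simp
  have yv: "y = (\<Sum>j\<in>J. u (v j) *\<^sub>R v j)" using uy sum.reindex[OF injJ, of "\<lambda>x. u x *\<^sub>R x"] by simp
  have "f i y = (if i \<in> J then u (v i) else 0)" if "i \<le> CARD('n)" for i
    unfolding yv using f_comb[OF J s1 that] .
  then show "y \<in> {y. (\<forall>i\<le>CARD('n). 0 \<le> f i y) \<and> (\<forall>i\<in>{..CARD('n)} - J. f i y = 0)}"
    using u0 by auto
next
  fix y assume y: "y \<in> {y. (\<forall>i\<le>CARD('n). 0 \<le> f i y) \<and> (\<forall>i\<in>{..CARD('n)} - J. f i y = 0)}"
  have fin: "finite J" using J finite_subset by blast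
  have "y = (\<Sum>i\<le>CARD('n). f i y *\<^sub>R v i)" using frep by simp
  also have "\<dots> = (\<Sum>i\<in>J. f i y *\<^sub>R v i)"
    using y J by (intro sum.mono_neutral_right) auto
  finally have yeq: "y = (\<Sum>i\<in>J. f i y *\<^sub>R v i)" .
  have "(\<Sum>i\<in>J. f i y) = (\<Sum>i\<le>CARD('n). f i y)"
    using y J by (intro sum.mono_neutral_right[symmetric]) auto
  then have s1: "(\<Sum>i\<in>J. f i y) = 1" using fsum1 by simp
  have "(\<Sum>i\<in>J. f i y *\<^sub>R v i) \<in> convex hull (v ` J)"
    by (rule convex_sum[OF fin convex_convex_hull s1]) (use y J in \<open>auto intro: hull_inc\<close>)
  then show "y \<in> convex hull (v ` J)" using yeq by simp
qed

lemma P_char: "PP = {y. \<forall>i\<le>CARD('n). 0 \<le> f i y}"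
  unfolding PP_def using hull_char[of "{..CARD('n)}"] by simp

lemma F_char: "i \<le> CARD('n) \<Longrightarrow> FF i = {y \<in> PP. f i y = 0}"
  unfolding FF_def P_char using hull_char[of "{..CARD('n)} - {i}"] by auto

lemma other: "i \<le> CARD('n) \<Longrightarrow> \<exists>j\<le>CARD('n). j \<noteq> i"
proof -
  have "CARD('n) \<ge> 1" by (simp add: Suc_leI)
  then show "i \<le> CARD('n) \<Longrightarrow> \<exists>j\<le>CARD('n). j \<noteq> i"
    by (cases "i = 0") (auto intro: exI[of _ 0] exI[of _ 1])
qed

lemma facets: "{F. F facet_of PP} = FF ` {..CARD('n)}"
proof -
  have e: "v ` {..CARD('n)} - {v i} = v ` ({..CARD('n)} - {i})" if "i \<le> CARD('n)" for i
    using inj that by (auto simp: inj_on_def)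
  have ne: "FF i \<noteq> {}" if ii: "i \<le> CARD('n)" for i
  proof -
    obtain j where "j \<le> CARD('n)" "j \<noteq> i" using other[OF ii] by blast
    then have "v j \<in> FF i" unfolding FF_def by (intro hull_inc) auto
    then show ?thesis by auto
  qed
  show ?thesis
    unfolding PP_def facet_of_convex_hull_affine_independent[OF indep]
    using e ne unfolding FF_def by auto
qed

lemma w_nz: "i \<le> CARD('n) \<Longrightarrow> w i \<noteq> 0"
proof
  assume i: "i \<le> CARD('n)" and w0: "w i = 0"
  obtain j where j: "j \<le> CARD('n)" "j \<noteq> i" using other[OF i] by blast
  have "f i (v i) = f i (v j)" using w0 by (simp add: f_def)
  then show False using fdelta[OF i i] fdelta[OF i j(1)] j by simp
qed

lemma ineq_form:
  assumes i: "i \<le> CARD('n)" and fi: "facet_ineq PP (FF i) c b"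
  shows "\<exists>\<alpha>>0. c = \<alpha> *\<^sub>R w i \<and> b = - \<alpha> * \<beta> i"
proof -
  have prim: "primitive_int_vec c" and Psub: "PP \<subseteq> {x. b \<le> c \<bullet> x}" and Feq: "FF i = PP \<inter> {x. c \<bullet> x = b}"
    using fi unfolding facet_ineq_def by auto
  have hv: "c \<bullet> v j = b" if "j \<le> CARD('n)" "j \<noteq> i" for j
  proof -
    have "v j \<in> FF i" unfolding FF_def using that by (intro hull_inc) auto
    then show ?thesis using Feq by auto
  qed
  define \<alpha> where "\<alpha> = c \<bullet> v i - b"
  have vP: "v i \<in> PP" unfolding PP_def using i by (intro hull_inc) auto
  have a0: "\<alpha> \<ge> 0" using Psub vP unfolding \<alpha>_def by auto
  have all: "c \<bullet> y - b = \<alpha> * f i y" for y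
  proof -
    have "c \<bullet> y - b = c \<bullet> (\<Sum>j\<le>CARD('n). f j y *\<^sub>R v j) - b * (\<Sum>j\<le>CARD('n). f j y)"
      using frep fsum1 by simp
    also have "\<dots> = (\<Sum>j\<le>CARD('n). f j y * (c \<bullet> v j - b))"
      by (simp add: inner_sum_right sum_distrib_left sum_subtractf algebra_simps)
    also have "\<dots> = (\<Sum>j\<le>CARD('n). if j = i then f j y * \<alpha> else 0)"
      using hv unfolding \<alpha>_def by (intro sum.cong refl) auto
    also have "\<dots> = \<alpha> * f i y" using i by simp
    finally show ?thesis .
  qed
  have b: "b = - \<alpha> * \<beta> i" using all[of 0] by (simp add: f_def)
  have c: "c = \<alpha> *\<^sub>R w i"
  proof -
    define d where "d = c - \<alpha> *\<^sub>R w i"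
    have "d \<bullet> y = 0" for y using all[of y] b unfolding d_def f_def by (simp add: inner_diff_left algebra_simps)
    then have "d \<bullet> d = 0" by simp
    then show ?thesis unfolding d_def by simp
  qed
  have "\<alpha> \<noteq> 0" using prim_nonzero[OF prim] c by auto
  then show ?thesis using a0 b c by (intro exI[of _ \<alpha>]) auto
qed

lemma ineq_exists:
  assumes i: "i \<le> CARD('n)"
  shows "\<exists>c b. facet_ineq PP (FF i) c b"
proof -
  obtain m where m: "m > 0" "primitive_int_vec (m *\<^sub>R w i)"
    using prim_exists[OF wrat[OF i] w_nz[OF i]] by blast
  have ev: "(m *\<^sub>R w i) \<bullet> x - (- m * \<beta> i) = m * f i x" for x by (simp add: f_def algebra_simps)
  have "facet_ineq PP (FF i) (m *\<^sub>R w i) (- m * \<beta> i)"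
    unfolding facet_ineq_def
  proof (intro conjI)
    show "FF i facet_of PP" using facets i by auto
    show "primitive_int_vec (m *\<^sub>R w i)" by (rule m)
    show "PP \<subseteq> {x. - m * \<beta> i \<le> (m *\<^sub>R w i) \<bullet> x}"
    proof
      fix x assume "x \<in> PP"
      then have "0 \<le> f i x" using P_char i by auto
      then have "0 \<le> (m *\<^sub>R w i) \<bullet> x - (- m * \<beta> i)" using ev[of x] m by simp
      then show "x \<in> {x. - m * \<beta> i \<le> (m *\<^sub>R w i) \<bullet> x}" by simp
    qed
    have "(m *\<^sub>R w i) \<bullet> x = - m * \<beta> i \<longleftrightarrow> f i x = 0" for x
      using ev[of x] m by (metis diff_eq_diff_eq diff_self mult_eq_0_iff order_less_irrefl eq_iff_diff_eq_0)
    then show "FF i = PP \<inter> {x. (m *\<^sub>R w i) \<bullet> x = - m * \<beta> i}" using F_char[OF i] by auto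
  qed
  then show ?thesis by blast
qed

lemma ld:
  assumes i: "i \<le> CARD('n)"
  shows "\<exists>\<alpha>>0. \<forall>y. lattice_dist PP (FF i) y = \<alpha> * f i y"
proof -
  obtain c b where cb: "facet_ineq PP (FF i) c b" using ineq_exists[OF i] by blast
  obtain \<alpha> where a: "\<alpha> > 0" "c = \<alpha> *\<^sub>R w i" "b = - \<alpha> * \<beta> i" using ineq_form[OF i cb] by blast
  have uniq: "c' = c \<and> b' = b" if cb': "facet_ineq PP (FF i) c' b'" for c' b'
  proof -
    obtain \<alpha>' where a': "\<alpha>' > 0" "c' = \<alpha>' *\<^sub>R w i" "b' = - \<alpha>' * \<beta> i" using ineq_form[OF i cb'] by blast
    have "c' = (\<alpha>' / \<alpha>) *\<^sub>R c" using a a' by simp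
    then have "\<alpha>' / \<alpha> = 1"
      using prim_unique[of c c' "\<alpha>' / \<alpha>"] cb cb' a a' unfolding facet_ineq_def by auto
    then have "\<alpha>' = \<alpha>" using a by simp
    then show ?thesis using a a' by simp
  qed
  have "lattice_dist PP (FF i) y = c \<bullet> y - b" for y
    unfolding lattice_dist_def
  proof (rule the_equality)
    show "\<exists>c' b'. facet_ineq PP (FF i) c' b' \<and> c \<bullet> y - b = c' \<bullet> y - b'" using cb by blast
    fix d assume "\<exists>c' b'. facet_ineq PP (FF i) c' b' \<and> d = c' \<bullet> y - b'"
    then show "d = c \<bullet> y - b" using uniq by blast
  qed
  moreover have "c \<bullet> y - b = \<alpha> * f i y" for y using a by (simp add: f_def algebra_simps)
  ultimately show ?thesis using a by auto
qed

end



lemma face_hom: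
  fixes a :: "real^'n"
  assumes t: "t > 0"
  shows "(\<lambda>x. a + t *\<^sub>R x) ` F face_of (\<lambda>x. a + t *\<^sub>R x) ` Q \<longleftrightarrow> F face_of Q"
proof -
  have lin: "linear ((*\<^sub>R) t :: real^'n \<Rightarrow> real^'n)" by (rule linearI) (auto simp: algebra_simps)
  have inj: "inj ((*\<^sub>R) t :: real^'n \<Rightarrow> real^'n)" using t by (auto intro: injI)
  have im: "(\<lambda>x. a + t *\<^sub>R x) ` X = (+) a ` ((*\<^sub>R) t ` X)" for X by (auto simp: image_image)
  show ?thesis unfolding im face_of_translation_eq face_of_linear_image[OF lin inj] ..
qed

lemma nf_hom:
  fixes a :: "real^'n"
  assumes t: "t > 0"
  shows "normal_fan ((\<lambda>x. a + t *\<^sub>R x) ` Q) = normal_fan Q"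
proof -
  define h where "h = (\<lambda>x. a + t *\<^sub>R x)"
  have surj: "surj h"
  proof -
    have "h ((1/t) *\<^sub>R (y - a)) = y" for y using t by (simp add: h_def)
    then show ?thesis by (rule surjI)
  qed
  have cone: "normal_cone (h ` Q) (h ` F) = normal_cone Q F" for F
  proof -
    have "u \<bullet> h y \<le> u \<bullet> h x \<longleftrightarrow> u \<bullet> y \<le> u \<bullet> x" for u x y
      using t by (simp add: h_def inner_add_right)
    then show ?thesis unfolding normal_cone_def by auto
  qed
  show ?thesis
    unfolding h_def[symmetric] normal_fan_def
  proof (intro equalityI subsetI)
    fix C assume "C \<in> {normal_cone (h ` Q) F |F. F face_of h ` Q \<and> F \<noteq> {}}"
    then obtain G where G: "C = normal_cone (h ` Q) G" "G face_of h ` Q" "G \<noteq> {}" by blast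
    have hG: "h ` (h -` G) = G" using surj by (rule surj_image_vimage_eq)
    have "(h -` G) face_of Q" using G(2) face_hom[OF t, of a "h -` G" Q] hG unfolding h_def by simp
    moreover have "h -` G \<noteq> {}" using G(3) hG by (metis image_empty)
    moreover have "C = normal_cone Q (h -` G)" using G(1) cone[of "h -` G"] hG by simp
    ultimately show "C \<in> {normal_cone Q F |F. F face_of Q \<and> F \<noteq> {}}" by blast
  next
    fix C assume "C \<in> {normal_cone Q F |F. F face_of Q \<and> F \<noteq> {}}"
    then obtain F where F: "C = normal_cone Q F" "F face_of Q" "F \<noteq> {}" by blast
    have "h ` F face_of h ` Q" using F(2) face_hom[OF t, of a F Q] unfolding h_def by blast
    moreover have "h ` F \<noteq> {}" using F(3) by simp
    moreover have "C = normal_cone (h ` Q) (h ` F)" using F(1) cone by simp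
    ultimately show "C \<in> {normal_cone (h ` Q) F |F. F face_of h ` Q \<and> F \<noteq> {}}" by blast
  qed
qed



theorem proposition3p9:
  fixes v :: "nat \<Rightarrow> real^'n" and P :: "(real^'n) set"
  assumes rat: "\<forall>i\<le>CARD('n). \<forall>j. v i $ j \<in> \<rat>"
    and inj: "inj_on v {..CARD('n)}"
    and indep: "\<not> affine_dependent (v ` {..CARD('n)})"
    and P_def: "P = convex hull (v ` {..CARD('n)})"
  shows "tau P = (\<Sum>i\<le>CARD('n). 1 / lattice_dist P (convex hull (v ` ({..CARD('n)} - {i}))) (v i))
       \<and> mu P = (\<Sum>i\<le>CARD('n). 1 / lattice_dist P (convex hull (v ` ({..CARD('n)} - {i}))) (v i))"
proof -
  obtain w \<beta> where wb: "(\<forall>i\<le>CARD('n). \<forall>j. w i $ j \<in> \<rat>)"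
     "(\<forall>i\<le>CARD('n). \<forall>j\<le>CARD('n). w i \<bullet> v j + \<beta> i = (if i = j then 1 else 0))"
     "(\<forall>y. (\<Sum>i\<le>CARD('n). w i \<bullet> y + \<beta> i) = 1)"
     "(\<forall>y. (\<Sum>i\<le>CARD('n). (w i \<bullet> y + \<beta> i) *\<^sub>R v i) = y)"
    using bary_exists[OF rat inj indep] by blast
  interpret bary v w \<beta> by (unfold_locales) (use inj indep wb in auto)
  have PP: "P = PP" unfolding P_def PP_def ..
  define a where "a i = lattice_dist P (FF i) (v i)" for i
  have a: "a i > 0" "lattice_dist P (FF i) y = a i * f i y" if i: "i \<le> CARD('n)" for i y
  proof -
    obtain \<alpha> where al: "\<alpha> > 0" "\<forall>y. lattice_dist PP (FF i) y = \<alpha> * f i y" using ld[OF i] by blast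
    have "a i = \<alpha>" unfolding a_def PP using al fdelta[OF i i] by simp
    then show "a i > 0" "lattice_dist P (FF i) y = a i * f i y" using al PP by auto
  qed
  define S where "S = (\<Sum>i\<le>CARD('n). 1 / a i)"
  have goal_sum: "(\<Sum>i\<le>CARD('n). 1 / lattice_dist P (convex hull (v ` ({..CARD('n)} - {i}))) (v i)) = S"
    unfolding S_def a_def FF_def ..
  have S: "S > 0" unfolding S_def using a(1) by (intro sum_pos) auto
  have dP: "dP P y = Min ((\<lambda>i. a i * f i y) ` {..CARD('n)})" for y
  proof -
    have "(\<lambda>F. lattice_dist P F y) ` {F. F facet_of P} = (\<lambda>i. a i * f i y) ` {..CARD('n)}"
      unfolding PP facets image_image using a(2) PP by auto
    then show ?thesis unfolding dP_def by (simp add: cInf_eq_Min)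
  qed
  have layer: "y \<in> layer P s \<longleftrightarrow> (\<forall>i\<le>CARD('n). s \<le> a i * f i y)" for y s
    unfolding layer_def dP by (auto simp: Ball_def)
  define ys where "ys = (\<Sum>i\<le>CARD('n). (1 / (a i * S)) *\<^sub>R v i)"
  have wsum: "(\<Sum>i\<le>CARD('n). 1 / (a i * S)) = 1"
  proof -
    have "(\<Sum>i\<le>CARD('n). 1 / (a i * S)) = (\<Sum>i\<le>CARD('n). 1 / a i) / S"
      by (simp add: sum_divide_distrib)
    then show ?thesis using S unfolding S_def by simp
  qed
  have fys: "f i ys = 1 / (a i * S)" if "i \<le> CARD('n)" for i
    unfolding ys_def using f_comb[OF order_refl wsum that] that by simp
  have ays: "a i * f i ys = 1 / S" if "i \<le> CARD('n)" for i
    using fys[OF that] a(1)[OF that] by simp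
  have ub: "s \<le> 1 / S" if lne: "layer P s \<noteq> {}" for s
  proof -
    obtain y where y: "y \<in> layer P s" using lne by blast
    have "s * (1 / a i) \<le> f i y" if i: "i \<le> CARD('n)" for i
    proof -
      have "s \<le> a i * f i y" using layer[of y s] y i by auto
      then show ?thesis using a(1)[OF i] by (simp add: pos_divide_le_eq mult.commute[of "f i y"])
    qed
    then have "(\<Sum>i\<le>CARD('n). s * (1 / a i)) \<le> (\<Sum>i\<le>CARD('n). f i y)" by (intro sum_mono) auto
    then have "s * S \<le> 1" unfolding S_def fsum1 sum_distrib_left by simp
    then show ?thesis using S by (simp add: le_divide_eq)
  qed
  have ys_layer: "ys \<in> layer P (1 / S)" unfolding layer using ays by simp
  have mu: "mu P = S"
  proof -
    have "Sup {s. s > 0 \<and> layer P s \<noteq> {}} = 1 / S"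
      by (rule cSup_eq_maximum) (use S ys_layer ub in auto)
    then show ?thesis unfolding mu_def by simp
  qed
  have homo: "layer P s = (\<lambda>x. (1 - (1 - s * S)) *\<^sub>R ys + (1 - s * S) *\<^sub>R x) ` P"
    if s: "0 < s" "s < 1 / S" for s
  proof -
    define t where "t = 1 - s * S"
    have t: "0 < t" "t < 1" unfolding t_def using s S by (auto simp: field_simps)
    have key: "a i * f i ((1 - t) *\<^sub>R ys + t *\<^sub>R x) = s + t * (a i * f i x)" if i: "i \<le> CARD('n)" for i x
    proof -
      have "a i * f i ((1 - t) *\<^sub>R ys + t *\<^sub>R x) = (1 - t) * (a i * f i ys) + t * (a i * f i x)"
        unfolding f_two by (simp add: algebra_simps)
      also have "\<dots> = s + t * (a i * f i x)" using ays[OF i] S unfolding t_def by simp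
      finally show ?thesis .
    qed
    have mem: "(1 - t) *\<^sub>R ys + t *\<^sub>R x \<in> layer P s \<longleftrightarrow> x \<in> P" for x
    proof -
      have "(1 - t) *\<^sub>R ys + t *\<^sub>R x \<in> layer P s \<longleftrightarrow> (\<forall>i\<le>CARD('n). 0 \<le> f i x)"
      proof -
        have pw: "(s \<le> a i * f i ((1 - t) *\<^sub>R ys + t *\<^sub>R x)) = (0 \<le> f i x)" if i: "i \<le> CARD('n)" for i
        proof -
          have "0 < t * a i" using t a(1)[OF i] by simp
          have "(0 \<le> (t * a i) * f i x) = (0 \<le> f i x)" using \<open>0 < t * a i\<close>
            by (smt (verit) mult_nonneg_nonneg mult_pos_neg)
          then show ?thesis unfolding key[OF i] by (simp add: algebra_simps)
        qed
        show ?thesis unfolding layer using pw by auto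
      qed
      then show ?thesis unfolding PP P_char by simp
    qed
    show ?thesis unfolding t_def[symmetric]
    proof (intro equalityI subsetI)
      fix y assume y: "y \<in> layer P s"
      define x where "x = (1 / t) *\<^sub>R (y - (1 - t) *\<^sub>R ys)"
      have yx: "y = (1 - t) *\<^sub>R ys + t *\<^sub>R x" unfolding x_def using t by simp
      then have "x \<in> P" using mem y by simp
      then show "y \<in> (\<lambda>x. (1 - t) *\<^sub>R ys + t *\<^sub>R x) ` P" using yx by blast
    next
      fix y assume "y \<in> (\<lambda>x. (1 - t) *\<^sub>R ys + t *\<^sub>R x) ` P"
      then show "y \<in> layer P s" using mem by auto
    qed
  qed
  have Pne: "P \<noteq> {}" unfolding P_def by simp
  have convP: "convex P" unfolding P_def by simp
  have nfP: "normal_fan P \<noteq> {}"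
    unfolding normal_fan_def using Pne face_of_refl[OF convP] by blast
  have T_in: "s \<in> {s. s > 0 \<and> normal_fan (layer P s) = normal_fan P}" if s: "0 < s" "s < 1 / S" for s
  proof -
    have "0 < 1 - s * S" using s S by (simp add: field_simps)
    then show ?thesis using homo[OF s] nf_hom[of "1 - s * S" "(1 - (1 - s * S)) *\<^sub>R ys" P] s by simp
  qed
  have T_ub: "s \<le> 1 / S" if sT: "s \<in> {s. s > 0 \<and> normal_fan (layer P s) = normal_fan P}" for s
  proof (rule ccontr)
    assume "\<not> s \<le> 1 / S"
    then have "layer P s = {}" using ub by force
    then have "normal_fan (layer P s) = {}" unfolding normal_fan_def by auto
    then show False using sT nfP by simp
  qed
  have tau: "tau P = S"
  proof -
    let ?T = "{s. s > 0 \<and> normal_fan (layer P s) = normal_fan P}"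
    have ne: "1 / (2 * S) \<in> ?T" using S by (intro T_in) (auto simp: field_simps)
    have bdd: "bdd_above ?T" using T_ub by (intro bdd_aboveI) blast
    have neT: "?T \<noteq> {}" using ne by blast
    have le: "Sup ?T \<le> 1 / S" by (rule cSup_least[OF neT]) (use T_ub in blast)
    have ge: "Sup ?T \<ge> 1 / S"
    proof (rule ccontr)
      assume "\<not> Sup ?T \<ge> 1 / S"
      then have lt: "Sup ?T < 1 / S" by simp
      have "1 / (2 * S) \<le> Sup ?T" using ne bdd by (rule cSup_upper)
      then have pos: "0 < Sup ?T" using S by (smt (verit) divide_pos_pos)
      define s where "s = (Sup ?T + 1 / S) / 2"
      have "s \<in> ?T" using pos lt unfolding s_def by (intro T_in) auto
      then have "s \<le> Sup ?T" using bdd by (rule cSup_upper)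
      then show False using lt unfolding s_def by simp
    qed
    have "Sup ?T = 1 / S" using le ge by simp
    then show ?thesis unfolding tau_def by simp
  qed
  show ?thesis using tau mu goal_sum by simp
qed

end
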